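(* If $M\Rrightarrow N_1$ and $M\Rrightarrow N_2$, then there exists $N$ such that $N_1\Rrightarrow N$ and $N_2\Rrightarrow N$.
   Context: Terms of $\lambda^{\triangleright}$: transition variables $\alpha,\beta,\dots$; a transition $A,B$ is a finite sequence of transition variables ($\varepsilon$ empty, $AB$ concatenation). Types $\tau ::= b \mid \tau\to\tau \mid \triangleright_\alpha\tau \mid \forall\alpha.\tau$. Terms $M ::= x \mid M\,M \mid \lambda x{:}\tau.M \mid \blacktriangleright_\alpha M \mid \blacktriangleleft_\alpha M \mid \Lambda\alpha.M \mid M\,A$ (quotation, unquotation, transition abstraction, instantiation by a transition); $x$ is bound in $\lambda x{:}\tau.M$ and $\alpha$ in $\Lambda\alpha.M$. For $A=\alpha_1\cdots\alpha_n$: $\blacktriangleright_A M=\blacktriangleright_{\alpha_1}\cdots\blacktriangleright_{\alpha_n}M$, $\blacktriangleleft_A M=\blacktriangleleft_{\alpha_n}\cdots\blacktriangleleft_{\alpha_1}M$ (identity when $A=\varepsilon$), and similarly $\triangleright_A\tau$. $M[x:=N]$ is capture-avoiding term substitution; $M[\alpha:=B]$ is capture-avoiding substitution of a transition $B$ for $\alpha$, replacing $\alpha$ by $B$ in transitions and $\triangleright_\alpha,\blacktriangleright_\alpha,\blacktriangleleft_\alpha$ by $\triangleright_B,\blacktriangleright_B,\blacktriangleleft_B$. Parallel reduction $M\Rrightarrow N$ is inductively defined by: $x\Rrightarrow x$; $M\Rrightarrow N\Rightarrow \lambda x{:}\tau.M\Rrightarrow\lambda x{:}\tau.N$; $M_1\Rrightarrow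 N_1, M_2\Rrightarrow N_2\Rightarrow M_1M_2\Rrightarrow N_1N_2$; $M_1\Rrightarrow N_1, M_2\Rrightarrow N_2\Rightarrow(\lambda x{:}\tau.M_1)M_2\Rrightarrow N_1[x:=N_2]$; $M\Rrightarrow N\Rightarrow\Lambda\alpha.M\Rrightarrow\Lambda\alpha.N$; $M\Rrightarrow N\Rightarrow M\,A\Rrightarrow N\,A$; $M\Rrightarrow N\Rightarrow(\Lambda\alpha.M)\,A\Rrightarrow N[\alpha:=A]$; $M\Rrightarrow N\Rightarrow\blacktriangleright_\alpha M\Rrightarrow\blacktriangleright_\alpha N$; $M\Rrightarrow N\Rightarrow\blacktriangleleft_\alpha M\Rrightarrow\blacktriangleleft_\alpha N$; and, for any transition $A$, $M\Rrightarrow N\Rightarrow\blacktriangleleft_A\blacktriangleright_A M\Rrightarrow N$. *)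

theory Defs
  imports Main
begin

text \<open>We use de Bruijn indices for both sorts of
variables (term variables and transition variables live in separate index
namespaces).\<close>

type_synonym tvar = nat
type_synonym transition = "tvar list"   \<comment> \<open>finite sequence of transition variables; [] = epsilon\<close>

datatype ty =
    TBase nat
  | TArr ty ty
  | TNext tvar ty
  | TAll ty              \<comment> \<open>\<forall>\<alpha>. \<tau>, binds transition index 0\<close>

datatype trm =
    Var nat
  | App trm trm
  | Lam ty trm           \<comment> \<open>\<lambda>x:\<tau>. M, binds term index 0\<close>
  | Quote tvar trm
  | Unquote tvar trm
  | TLam trm             \<comment> \<open>\<Lambda>\<alpha>. M, binds transition index 0\<close>
  | TApp trm transition

text \<open>Iterated constructs: for A = a1...an,
  \<triangleright>_A \<tau> = \<triangleright>_a1 ... \<triangleright>_an \<tau>,  \<blacktriangleright>_A M = \<blacktriangleright>_a1 ... \<blacktriangleright>_an M,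
  \<blacktriangleleft>_A M = \<blacktriangleleft>_an ... \<blacktriangleleft>_a1 M.\<close>

definition tnexts :: "transition \<Rightarrow> ty \<Rightarrow> ty" where
  "tnexts A \<tau> = foldr TNext A \<tau>"

definition quotes :: "transition \<Rightarrow> trm \<Rightarrow> trm" where
  "quotes A M = foldr Quote A M"

definition unquotes :: "transition \<Rightarrow> trm \<Rightarrow> trm" where
  "unquotes A M = foldl (\<lambda>N a. Unquote a N) M A"

definition lift_tr :: "nat \<Rightarrow> transition \<Rightarrow> transition" where
  "lift_tr c A = map (\<lambda>i. if i < c then i else Suc i) A"

definition subst_tr :: "nat \<Rightarrow> transition \<Rightarrow> transition \<Rightarrow> transition" where
  "subst_tr k B A = concat (map (\<lambda>i. if i = k then B else if i < k then [i] else [i - 1]) A)"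

fun lift_ty :: "nat \<Rightarrow> ty \<Rightarrow> ty" where
  "lift_ty c (TBase b) = TBase b"
| "lift_ty c (TArr s t) = TArr (lift_ty c s) (lift_ty c t)"
| "lift_ty c (TNext i t) = TNext (if i < c then i else Suc i) (lift_ty c t)"
| "lift_ty c (TAll t) = TAll (lift_ty (Suc c) t)"

fun subst_ty :: "nat \<Rightarrow> transition \<Rightarrow> ty \<Rightarrow> ty" where
  "subst_ty k B (TBase b) = TBase b"
| "subst_ty k B (TArr s t) = TArr (subst_ty k B s) (subst_ty k B t)"
| "subst_ty k B (TNext i t) = tnexts (subst_tr k B [i]) (subst_ty k B t)"
| "subst_ty k B (TAll t) = TAll (subst_ty (Suc k) (lift_tr 0 B) t)"

fun tv_lift :: "nat \<Rightarrow> trm \<Rightarrow> trm" where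
  "tv_lift c (Var x) = Var x"
| "tv_lift c (App M N) = App (tv_lift c M) (tv_lift c N)"
| "tv_lift c (Lam t M) = Lam (lift_ty c t) (tv_lift c M)"
| "tv_lift c (Quote i M) = Quote (if i < c then i else Suc i) (tv_lift c M)"
| "tv_lift c (Unquote i M) = Unquote (if i < c then i else Suc i) (tv_lift c M)"
| "tv_lift c (TLam M) = TLam (tv_lift (Suc c) M)"
| "tv_lift c (TApp M A) = TApp (tv_lift c M) (lift_tr c A)"

fun tv_subst :: "nat \<Rightarrow> transition \<Rightarrow> trm \<Rightarrow> trm" where
  "tv_subst k B (Var x) = Var x"
| "tv_subst k B (App M N) = App (tv_subst k B M) (tv_subst k B N)"
| "tv_subst k B (Lam t M) = Lam (subst_ty k B t) (tv_subst k B M)"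
| "tv_subst k B (Quote i M) = quotes (subst_tr k B [i]) (tv_subst k B M)"
| "tv_subst k B (Unquote i M) = unquotes (subst_tr k B [i]) (tv_subst k B M)"
| "tv_subst k B (TLam M) = TLam (tv_subst (Suc k) (lift_tr 0 B) M)"
| "tv_subst k B (TApp M A) = TApp (tv_subst k B M) (subst_tr k B A)"

fun lift :: "nat \<Rightarrow> trm \<Rightarrow> trm" where
  "lift c (Var x) = Var (if x < c then x else Suc x)"
| "lift c (App M N) = App (lift c M) (lift c N)"
| "lift c (Lam t M) = Lam t (lift (Suc c) M)"
| "lift c (Quote i M) = Quote i (lift c M)"
| "lift c (Unquote i M) = Unquote i (lift c M)"
| "lift c (TLam M) = TLam (lift c M)"
| "lift c (TApp M A) = TApp (lift c M) A"

fun subst :: "nat \<Rightarrow> trm \<Rightarrow> trm \<Rightarrow> trm" where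
  "subst k N (Var x) = (if x = k then N else if x < k then Var x else Var (x - 1))"
| "subst k N (App M1 M2) = App (subst k N M1) (subst k N M2)"
| "subst k N (Lam t M) = Lam t (subst (Suc k) (lift 0 N) M)"
| "subst k N (Quote i M) = Quote i (subst k N M)"
| "subst k N (Unquote i M) = Unquote i (subst k N M)"
| "subst k N (TLam M) = TLam (subst k (tv_lift 0 N) M)"
| "subst k N (TApp M A) = TApp (subst k N M) A"

inductive par_red :: "trm \<Rightarrow> trm \<Rightarrow> bool" (infix "\<Rrightarrow>" 50) where
  pr_var:     "Var x \<Rrightarrow> Var x"
| pr_lam:     "M \<Rrightarrow> N \<Longrightarrow> Lam t M \<Rrightarrow> Lam t N"
| pr_app:     "M1 \<Rrightarrow> N1 \<Longrightarrow> M2 \<Rrightarrow> N2 \<Longrightarrow> App M1 M2 \<Rrightarrow> App N1 N2"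
| pr_beta:    "M1 \<Rrightarrow> N1 \<Longrightarrow> M2 \<Rrightarrow> N2 \<Longrightarrow> App (Lam t M1) M2 \<Rrightarrow> subst 0 N2 N1"
| pr_tlam:    "M \<Rrightarrow> N \<Longrightarrow> TLam M \<Rrightarrow> TLam N"
| pr_tapp:    "M \<Rrightarrow> N \<Longrightarrow> TApp M A \<Rrightarrow> TApp N A"
| pr_tbeta:   "M \<Rrightarrow> N \<Longrightarrow> TApp (TLam M) A \<Rrightarrow> tv_subst 0 A N"
| pr_quote:   "M \<Rrightarrow> N \<Longrightarrow> Quote a M \<Rrightarrow> Quote a N"
| pr_unquote: "M \<Rrightarrow> N \<Longrightarrow> Unquote a M \<Rrightarrow> Unquote a N"
| pr_qu:      "M \<Rrightarrow> N \<Longrightarrow> unquotes A (quotes A M) \<Rrightarrow> N"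

end

theory Submission
  imports Defs
begin

lemma quotes_simps[simp]: "quotes [] M = M" "quotes (a#A) M = Quote a (quotes A M)"
  by (simp_all add: quotes_def)
lemma unquotes_simps[simp]: "unquotes [] M = M" "unquotes (a#A) M = unquotes A (Unquote a M)"
  by (simp_all add: unquotes_def)
lemma tnexts_simps[simp]: "tnexts [] t = t" "tnexts (a#A) t = TNext a (tnexts A t)"
  by (simp_all add: tnexts_def)
lemma quotes_append[simp]: "quotes (A@B) M = quotes A (quotes B M)"
  by (induct A) auto
lemma unquotes_append[simp]: "unquotes (A@B) M = unquotes B (unquotes A M)"
  by (induct A arbitrary: M) auto
lemma tnexts_append[simp]: "tnexts (A@B) t = tnexts A (tnexts B t)"
  by (induct A) auto
lemma unquotes_snoc: "unquotes (A@[a]) M = Unquote a (unquotes A M)"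
  by simp

definition ups :: "(nat \<Rightarrow> transition) \<Rightarrow> nat \<Rightarrow> transition" where
  "ups \<sigma> i = (case i of 0 \<Rightarrow> [0] | Suc j \<Rightarrow> map Suc (\<sigma> j))"

lemma ups_simps[simp]: "ups \<sigma> 0 = [0]" "ups \<sigma> (Suc j) = map Suc (\<sigma> j)"
  by (simp_all add: ups_def)

fun tsty :: "(nat \<Rightarrow> transition) \<Rightarrow> ty \<Rightarrow> ty" where
  "tsty \<sigma> (TBase b) = TBase b"
| "tsty \<sigma> (TArr s t) = TArr (tsty \<sigma> s) (tsty \<sigma> t)"
| "tsty \<sigma> (TNext i t) = tnexts (\<sigma> i) (tsty \<sigma> t)"
| "tsty \<sigma> (TAll t) = TAll (tsty (ups \<sigma>) t)"

fun ts :: "(nat \<Rightarrow> transition) \<Rightarrow> trm \<Rightarrow> trm" where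
  "ts \<sigma> (Var x) = Var x"
| "ts \<sigma> (App M N) = App (ts \<sigma> M) (ts \<sigma> N)"
| "ts \<sigma> (Lam t M) = Lam (tsty \<sigma> t) (ts \<sigma> M)"
| "ts \<sigma> (Quote i M) = quotes (\<sigma> i) (ts \<sigma> M)"
| "ts \<sigma> (Unquote i M) = unquotes (\<sigma> i) (ts \<sigma> M)"
| "ts \<sigma> (TLam M) = TLam (ts (ups \<sigma>) M)"
| "ts \<sigma> (TApp M A) = TApp (ts \<sigma> M) (concat (map \<sigma> A))"

definition sg :: "nat \<Rightarrow> transition \<Rightarrow> nat \<Rightarrow> transition" where
  "sg k B i = (if i = k then B else if i < k then [i] else [i - 1])"
definition rn :: "nat \<Rightarrow> nat \<Rightarrow> transition" where
  "rn c i = [if i < c then i else Suc i]"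
definition tcomp :: "(nat \<Rightarrow> transition) \<Rightarrow> (nat \<Rightarrow> transition) \<Rightarrow> nat \<Rightarrow> transition" where
  "tcomp \<sigma> \<tau> i = concat (map \<sigma> (\<tau> i))"

lemma lift_tr0: "lift_tr 0 A = map Suc A" by (simp add: lift_tr_def)

lemma ups_sg: "ups (sg k B) = sg (Suc k) (lift_tr 0 B)"
  by (rule ext, case_tac x) (auto simp: sg_def lift_tr0)
lemma ups_rn: "ups (rn c) = rn (Suc c)"
  by (rule ext, case_tac x) (auto simp: rn_def)

lemma subst_tr_sg: "subst_tr k B A = concat (map (sg k B) A)"
  unfolding subst_tr_def sg_def by (rule refl)
lemma lift_tr_rn: "lift_tr c A = concat (map (rn c) A)"
  by (induct A) (auto simp: lift_tr_def rn_def)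

lemma subst_ty_ts: "subst_ty k B t = tsty (sg k B) t"
  by (induct t arbitrary: k B) (auto simp: ups_sg subst_tr_sg)
lemma tv_subst_ts: "tv_subst k B M = ts (sg k B) M"
  by (induct M arbitrary: k B) (auto simp: ups_sg subst_tr_sg subst_ty_ts)
lemma lift_ty_ts: "lift_ty c t = tsty (rn c) t"
  by (induct t arbitrary: c) (auto simp: ups_rn rn_def)
lemma tv_lift_ts: "tv_lift c M = ts (rn c) M"
  by (induct M arbitrary: c) (auto simp: ups_rn rn_def lift_ty_ts lift_tr_rn)

lemma ts_quotes[simp]: "ts \<sigma> (quotes A M) = quotes (concat (map \<sigma> A)) (ts \<sigma> M)"
  by (induct A) auto
lemma ts_unquotes[simp]: "ts \<sigma> (unquotes A M) = unquotes (concat (map \<sigma> A)) (ts \<sigma> M)"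
  by (induct A arbitrary: M) auto
lemma tsty_tnexts[simp]: "tsty \<sigma> (tnexts A t) = tnexts (concat (map \<sigma> A)) (tsty \<sigma> t)"
  by (induct A) auto

lemma ups_comp: "ups (tcomp \<sigma> \<tau>) = tcomp (ups \<sigma>) (ups \<tau>)"
  by (rule ext, case_tac x) (auto simp: tcomp_def map_concat o_def)

lemma concat_comp: "concat (map \<sigma> (concat (map \<tau> A))) = concat (map (tcomp \<sigma> \<tau>) A)"
  by (induct A) (auto simp: tcomp_def)

lemma tsty_tsty: "tsty \<sigma> (tsty \<tau> t) = tsty (tcomp \<sigma> \<tau>) t"
  by (induct t arbitrary: \<sigma> \<tau>) (auto simp: ups_comp tcomp_def)
lemma ts_ts: "ts \<sigma> (ts \<tau> M) = ts (tcomp \<sigma> \<tau>) M"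
  by (induct M arbitrary: \<sigma> \<tau>) (auto simp: ups_comp tcomp_def tsty_tsty concat_comp)

lemma ups_id: "ups (\<lambda>i. [i]) = (\<lambda>i. [i])"
  by (auto simp: fun_eq_iff ups_def split: nat.split)
lemma tsty_id: "tsty (\<lambda>i. [i]) t = t"
  by (induct t) (auto simp: ups_id)
lemma ts_id: "ts (\<lambda>i. [i]) M = M"
  by (induct M) (auto simp: ups_id tsty_id)


lemma lift_quotes[simp]: "lift c (quotes A M) = quotes A (lift c M)"
  by (induct A) auto
lemma lift_unquotes[simp]: "lift c (unquotes A M) = unquotes A (lift c M)"
  by (induct A arbitrary: M) auto
lemma subst_quotes[simp]: "subst c N (quotes A M) = quotes A (subst c N M)"
  by (induct A) auto
lemma subst_unquotes[simp]: "subst c N (unquotes A M) = unquotes A (subst c N M)"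
  by (induct A arbitrary: M) auto

lemma lift_ts: "lift c (ts \<sigma> M) = ts \<sigma> (lift c M)"
  by (induct M arbitrary: c \<sigma>) auto

lemma concat_rn0[simp]: "concat (map (rn 0) xs) = map Suc xs"
  by (induct xs) (auto simp: rn_def)
lemma ups_rn0: "tcomp (ups \<sigma>) (rn 0) = tcomp (rn 0) \<sigma>"
  by (rule ext) (simp add: tcomp_def rn_def map_concat o_def)
lemma ts_ups_tvlift: "ts (ups \<sigma>) (tv_lift 0 N) = tv_lift 0 (ts \<sigma> N)"
  by (simp add: tv_lift_ts ts_ts ups_rn0)

lemma ts_subst: "ts \<sigma> (subst j N M) = subst j (ts \<sigma> N) (ts \<sigma> M)"
  by (induct M arbitrary: \<sigma> j N) (auto simp: lift_ts ts_ups_tvlift)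

lemma lift_tvlift: "lift c (tv_lift d N) = tv_lift d (lift c N)"
  by (simp add: tv_lift_ts lift_ts)
lemma tvlift_subst: "tv_lift d (subst j v u) = subst j (tv_lift d v) (tv_lift d u)"
  by (simp add: tv_lift_ts ts_subst)

lemma lift_lift: "i \<le> k \<Longrightarrow> lift (Suc k) (lift i t) = lift i (lift k t)"
  by (induct t arbitrary: i k) auto
lemma lift_subst: "j \<le> i \<Longrightarrow> lift i (subst j s t) = subst j (lift i s) (lift (Suc i) t)"
  by (induct t arbitrary: i j s) (auto simp: lift_lift lift_tvlift)
lemma lift_subst_lt: "i \<le> j \<Longrightarrow> lift i (subst j s t) = subst (Suc j) (lift i s) (lift i t)"
  by (induct t arbitrary: i j s) (auto simp: lift_lift lift_tvlift)
lemma subst_lift[simp]: "subst k s (lift k t) = t"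
  by (induct t arbitrary: k s) auto
lemma subst_subst: "i \<le> j \<Longrightarrow>
  subst i (subst j v u) (subst (Suc j) (lift i v) t) = subst j v (subst i u t)"
proof (induct t arbitrary: i j u v)
  case (Lam t M)
  have "lift 0 (lift i v) = lift (Suc i) (lift 0 v)" using lift_lift[of 0 i v] by simp
  then show ?case using Lam by (simp add: lift_subst_lt)
next
  case (TLam M)
  have "tv_lift 0 (lift i v) = lift i (tv_lift 0 v)" by (simp add: lift_tvlift)
  then show ?case using TLam by (simp add: tvlift_subst)
qed auto


lemma par_refl[simp, intro]: "M \<Rrightarrow> M"
  by (induct M) (auto intro: par_red.intros)

lemma par_quotes: "M \<Rrightarrow> N \<Longrightarrow> quotes A M \<Rrightarrow> quotes A N"
  by (induct A) (auto intro: par_red.intros)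
lemma par_unquotes: "M \<Rrightarrow> N \<Longrightarrow> unquotes A M \<Rrightarrow> unquotes A N"
  by (induct A arbitrary: M N) (auto intro: par_red.intros)

lemma par_lift: "M \<Rrightarrow> N \<Longrightarrow> lift c M \<Rrightarrow> lift c N"
proof (induct arbitrary: c rule: par_red.induct)
  case (pr_beta M1 N1 M2 N2 t)
  then show ?case using par_red.pr_beta[of "lift (Suc c) M1" "lift (Suc c) N1" "lift c M2" "lift c N2" t]
    by (simp add: lift_subst)
next
  case (pr_tbeta M N A)
  then show ?case using par_red.pr_tbeta[of "lift c M" "lift c N" A]
    by (simp add: tv_subst_ts lift_ts)
next
  case (pr_qu M N A)
  then show ?case using par_red.pr_qu by simp
qed (auto intro: par_red.intros)

lemma tcomp_sg0: "tcomp \<sigma> (sg 0 A) = tcomp (sg 0 (concat (map \<sigma> A))) (ups \<sigma>)"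
proof (rule ext)
  fix i show "tcomp \<sigma> (sg 0 A) i = tcomp (sg 0 (concat (map \<sigma> A))) (ups \<sigma>) i"
  proof (cases i)
    case 0 then show ?thesis by (simp add: tcomp_def sg_def)
  next
    case (Suc j)
    have "concat (map (sg 0 B) (map Suc xs)) = xs" for B xs
      by (induct xs) (auto simp: sg_def)
    then show ?thesis using Suc by (simp add: tcomp_def sg_def)
  qed
qed

lemma par_ts: "M \<Rrightarrow> N \<Longrightarrow> ts \<sigma> M \<Rrightarrow> ts \<sigma> N"
proof (induct arbitrary: \<sigma> rule: par_red.induct)
  case (pr_beta M1 N1 M2 N2 t)
  then show ?case by (simp add: ts_subst par_red.pr_beta)
next
  case (pr_tbeta M N A)
  have "ts \<sigma> (ts (sg 0 A) N) = ts (sg 0 (concat (map \<sigma> A))) (ts (ups \<sigma>) N)"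
    by (simp add: ts_ts tcomp_sg0)
  then show ?case using pr_tbeta par_red.pr_tbeta[of "ts (ups \<sigma>) M" "ts (ups \<sigma>) N" "concat (map \<sigma> A)"]
    by (simp add: tv_subst_ts)
next
  case (pr_qu M N A)
  then show ?case using par_red.pr_qu by simp
qed (auto intro: par_red.intros par_quotes par_unquotes)

lemma tvsubst_tvlift: "tv_subst 0 A (tv_lift 0 N) = N"
proof -
  have "tcomp (sg 0 A) (rn 0) = (\<lambda>i. [i])"
    by (rule ext) (simp add: tcomp_def sg_def rn_def)
  then show ?thesis by (simp add: tv_subst_ts tv_lift_ts ts_ts ts_id)
qed

lemma par_subst: "M \<Rrightarrow> M' \<Longrightarrow> N \<Rrightarrow> N' \<Longrightarrow> subst k N M \<Rrightarrow> subst k N' M'"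
proof (induct arbitrary: k N N' rule: par_red.induct)
  case (pr_lam M M2 t)
  then show ?case by (simp add: par_red.pr_lam par_lift)
next
  case (pr_tlam M M2)
  then show ?case by (auto intro!: par_red.intros simp: tv_lift_ts par_ts)
next
  case (pr_beta M1 N1 M2 N2 t)
  have "subst k N (App (Lam t M1) M2) \<Rrightarrow> subst 0 (subst k N' N2) (subst (Suc k) (lift 0 N') N1)"
    using pr_beta by (auto intro!: par_red.pr_beta par_lift)
  then show ?case using subst_subst[of 0 k N' N2 N1] by simp
next
  case (pr_tbeta M M2 A)
  have "subst k N (TApp (TLam M) A) \<Rrightarrow> tv_subst 0 A (subst k (tv_lift 0 N') M2)"
    using pr_tbeta by (auto intro!: par_red.pr_tbeta simp: tv_lift_ts par_ts)
  then show ?case by (simp add: tv_subst_ts ts_subst tvsubst_tvlift[unfolded tv_subst_ts])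
next
  case (pr_qu M M2 A)
  then show ?case using par_red.pr_qu by simp
qed (auto intro: par_red.intros)


lemma unq_last: "A \<noteq> [] \<Longrightarrow> unquotes A M = Unquote (last A) (unquotes (butlast A) M)"
  by (metis append_butlast_last_id unquotes_snoc)
lemma q_hd: "A \<noteq> [] \<Longrightarrow> quotes A M = Quote (hd A) (quotes (tl A) M)"
  by (cases A) auto

lemma unquotes_prefix:
  "length A \<le> length C \<Longrightarrow> unquotes A Y = unquotes C Z \<Longrightarrow> \<exists>C1. C = C1 @ A \<and> Y = unquotes C1 Z"
proof (induct A arbitrary: C rule: rev_induct)
  case Nil then show ?case by simp
next
  case (snoc a A)
  then obtain C' c where C: "C = C' @ [c]"
    by (metis length_greater_0_conv less_le_trans length_append_singleton rev_exhaust zero_less_Suc)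
  with snoc show ?case by auto
qed

lemma quotes_inj: "length A = length C \<Longrightarrow> quotes A P = quotes C Q \<Longrightarrow> A = C \<and> P = Q"
proof (induct A arbitrary: C)
  case (Cons a A)
  then obtain c C' where "C = c # C'" by (cases C) auto
  with Cons show ?case by auto
qed simp

lemma uq_unique1:
  assumes "A \<noteq> []" "length A \<le> length C" "unquotes A (quotes A P) = unquotes C (quotes C Q)"
  shows "A = C \<and> P = Q"
proof -
  obtain C1 where C: "C = C1 @ A" and e: "quotes A P = unquotes C1 (quotes C Q)"
    using unquotes_prefix[OF assms(2,3)] by blast
  show ?thesis
  proof (cases "C1 = []")
    case True then show ?thesis using e C quotes_inj by auto
  next
    case False then show ?thesis using e assms(1) by (simp add: unq_last q_hd)
  qed
qed

lemma uq_unique: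
  "A \<noteq> [] \<Longrightarrow> C \<noteq> [] \<Longrightarrow> unquotes A (quotes A P) = unquotes C (quotes C Q) \<Longrightarrow> A = C \<and> P = Q"
  by (metis uq_unique1 nat_le_linear)

lemma inv_var: "Var x \<Rrightarrow> N \<Longrightarrow> N = Var x"
proof (induct "Var x" N rule: par_red.induct)
  case (pr_qu M N A) then show ?case by (cases "A = []") (auto simp: unq_last)
qed auto
lemma inv_lam: "Lam t X \<Rrightarrow> N \<Longrightarrow> \<exists>X'. N = Lam t X' \<and> X \<Rrightarrow> X'"
proof (induct "Lam t X" N arbitrary: X rule: par_red.induct)
  case (pr_qu M N A) then show ?case by (cases "A = []") (auto simp: unq_last)
qed auto
lemma inv_tlam: "TLam X \<Rrightarrow> N \<Longrightarrow> \<exists>X'. N = TLam X' \<and> X \<Rrightarrow> X'"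
proof (induct "TLam X" N arbitrary: X rule: par_red.induct)
  case (pr_qu M N A) then show ?case by (cases "A = []") (auto simp: unq_last)
qed auto
lemma inv_quote: "Quote a X \<Rrightarrow> N \<Longrightarrow> \<exists>X'. N = Quote a X' \<and> X \<Rrightarrow> X'"
proof (induct "Quote a X" N arbitrary: X rule: par_red.induct)
  case (pr_qu M N A) then show ?case by (cases "A = []") (auto simp: unq_last)
qed auto
lemma inv_app: "App M1 M2 \<Rrightarrow> N \<Longrightarrow>
   (\<exists>N1 N2. N = App N1 N2 \<and> M1 \<Rrightarrow> N1 \<and> M2 \<Rrightarrow> N2) \<or>
   (\<exists>t P P' R'. M1 = Lam t P \<and> P \<Rrightarrow> P' \<and> M2 \<Rrightarrow> R' \<and> N = subst 0 R' P')"
proof (induct "App M1 M2" N arbitrary: M1 M2 rule: par_red.induct)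
  case (pr_qu M N A) then show ?case by (cases "A = []") (auto simp: unq_last)
qed auto
lemma inv_tapp: "TApp M1 B \<Rrightarrow> N \<Longrightarrow>
   (\<exists>N1. N = TApp N1 B \<and> M1 \<Rrightarrow> N1) \<or>
   (\<exists>P P'. M1 = TLam P \<and> P \<Rrightarrow> P' \<and> N = tv_subst 0 B P')"
proof (induct "TApp M1 B" N arbitrary: M1 rule: par_red.induct)
  case (pr_qu M N A) then show ?case by (cases "A = []") (auto simp: unq_last)
qed auto
lemma inv_unquote: "Unquote a X \<Rrightarrow> N \<Longrightarrow>
   (\<exists>X'. N = Unquote a X' \<and> X \<Rrightarrow> X') \<or>
   (\<exists>C Q. C \<noteq> [] \<and> Unquote a X = unquotes C (quotes C Q) \<and> Q \<Rrightarrow> N)"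
proof (induct "Unquote a X" N arbitrary: X rule: par_red.induct)
  case (pr_qu M N A)
  show ?case
  proof (cases "A = []")
    case True with pr_qu show ?thesis by simp
  next
    case False with pr_qu show ?thesis by (intro disjI2 exI[of _ A] exI[of _ M]) auto
  qed
qed auto

lemma peel: "X \<Rrightarrow> N \<Longrightarrow> A \<noteq> [] \<Longrightarrow> X = unquotes A (quotes A P) \<Longrightarrow>
   \<exists>C D P'. A = C @ D \<and> N = unquotes D (quotes D P') \<and> P \<Rrightarrow> P'"
proof (induct arbitrary: A P rule: par_red.induct)
  case (pr_unquote M N' b)
  define B where "B = butlast A"
  define a where "a = last A"
  have A: "A = B @ [a]" using pr_unquote.prems B_def a_def by simp
  have bM: "b = a" "M = unquotes B (quotes B (Quote a P))"
    using pr_unquote.prems A by auto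
  show ?case
  proof (cases "B = []")
    case True
    then have "Quote a P \<Rrightarrow> N'" using pr_unquote bM by simp
    then obtain P' where "N' = Quote a P'" "P \<Rrightarrow> P'" using inv_quote by blast
    then show ?thesis using A True bM by (intro exI[of _ "[]"] exI[of _ "[a]"]) auto
  next
    case False
    then obtain C D P'' where "B = C @ D" "N' = unquotes D (quotes D P'')" "Quote a P \<Rrightarrow> P''"
      using pr_unquote.hyps(2)[OF False bM(2)] by blast
    moreover obtain P' where "P'' = Quote a P'" "P \<Rrightarrow> P'" using inv_quote calculation(3) by blast
    ultimately show ?thesis using A bM
      by (intro exI[of _ C] exI[of _ "D @ [a]"] exI[of _ P']) auto
  qed
next
  case (pr_qu M N C)
  show ?case
  proof (cases "C = []")
    case True then show ?thesis using pr_qu by simp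
  next
    case False
    then have "A = C \<and> P = M" using uq_unique[of A C P M] pr_qu.prems by simp
    then show ?thesis using pr_qu by (intro exI[of _ A] exI[of _ "[]"] exI[of _ N]) auto
  qed
qed (auto simp: unq_last)

lemma size_quotes[simp]: "size (quotes A M) = size M + length A"
  by (induct A) auto
lemma size_unquotes[simp]: "size (unquotes A M) = size M + length A"
  by (induct A arbitrary: M) auto


lemma qu_join:
  assumes IH: "\<And>N1 N2. Q \<Rrightarrow> N1 \<Longrightarrow> Q \<Rrightarrow> N2 \<Longrightarrow> \<exists>N. N1 \<Rrightarrow> N \<and> N2 \<Rrightarrow> N"
    and C: "C \<noteq> []" and M: "M = unquotes C (quotes C Q)" and Q: "Q \<Rrightarrow> N2" and M1: "M \<Rrightarrow> N1"
  shows "\<exists>N. N1 \<Rrightarrow> N \<and> N2 \<Rrightarrow> N"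
proof -
  obtain C0 D Q1 where "N1 = unquotes D (quotes D Q1)" "Q \<Rrightarrow> Q1"
    using peel[OF M1 C M] by blast
  moreover obtain N where "Q1 \<Rrightarrow> N" "N2 \<Rrightarrow> N" using IH calculation(2) Q by blast
  ultimately show ?thesis using par_red.pr_qu by blast
qed

lemma diamond: "M \<Rrightarrow> N1 \<Longrightarrow> M \<Rrightarrow> N2 \<Longrightarrow> \<exists>N. N1 \<Rrightarrow> N \<and> N2 \<Rrightarrow> N"
proof (induct M arbitrary: N1 N2 rule: measure_induct_rule[of size])
  case (less M)
  show ?case
  proof (cases M)
    case (Var x)
    then show ?thesis using less.prems inv_var by blast
  next
    case (Lam t X)
    then obtain X1 X2 where "N1 = Lam t X1" "X \<Rrightarrow> X1" "N2 = Lam t X2" "X \<Rrightarrow> X2"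
      using less.prems inv_lam by metis
    moreover obtain N where "X1 \<Rrightarrow> N" "X2 \<Rrightarrow> N" using less.hyps Lam calculation by force
    ultimately show ?thesis by (blast intro: par_red.intros)
  next
    case (TLam X)
    then obtain X1 X2 where "N1 = TLam X1" "X \<Rrightarrow> X1" "N2 = TLam X2" "X \<Rrightarrow> X2"
      using less.prems inv_tlam by metis
    moreover obtain N where "X1 \<Rrightarrow> N" "X2 \<Rrightarrow> N" using less.hyps TLam calculation by force
    ultimately show ?thesis by (blast intro: par_red.intros)
  next
    case (Quote a X)
    then obtain X1 X2 where "N1 = Quote a X1" "X \<Rrightarrow> X1" "N2 = Quote a X2" "X \<Rrightarrow> X2"
      using less.prems inv_quote by metis
    moreover obtain N where "X1 \<Rrightarrow> N" "X2 \<Rrightarrow> N" using less.hyps Quote calculation by force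
    ultimately show ?thesis by (blast intro: par_red.intros)
  next
    case (Unquote a X)
    show ?thesis
    proof (cases "\<exists>C Q. C \<noteq> [] \<and> M = unquotes C (quotes C Q) \<and> (Q \<Rrightarrow> N1 \<or> Q \<Rrightarrow> N2)")
      case True
      then obtain C Q where CQ: "C \<noteq> []" "M = unquotes C (quotes C Q)" "Q \<Rrightarrow> N1 \<or> Q \<Rrightarrow> N2"
        by blast
      have sz: "size Q < size M" using CQ by simp
      have IH: "\<And>N1 N2. Q \<Rrightarrow> N1 \<Longrightarrow> Q \<Rrightarrow> N2 \<Longrightarrow> \<exists>N. N1 \<Rrightarrow> N \<and> N2 \<Rrightarrow> N"
        using less.hyps[OF sz] by blast
      from CQ(3) show ?thesis
      proof
        assume "Q \<Rrightarrow> N1"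
        then obtain N where "N2 \<Rrightarrow> N" "N1 \<Rrightarrow> N" using qu_join[OF IH CQ(1,2) _ less.prems(2)] by blast
        then show ?thesis by blast
      next
        assume "Q \<Rrightarrow> N2"
        then show ?thesis using qu_join[OF IH CQ(1,2) _ less.prems(1)] by blast
      qed
    next
      case False
      then obtain X1 X2 where "N1 = Unquote a X1" "X \<Rrightarrow> X1" "N2 = Unquote a X2" "X \<Rrightarrow> X2"
        using less.prems inv_unquote Unquote by metis
      moreover obtain N where "X1 \<Rrightarrow> N" "X2 \<Rrightarrow> N" using less.hyps Unquote calculation by force
      ultimately show ?thesis by (blast intro: par_red.intros)
    qed
  next
    case (App M1 M2)
    have IH1: "\<And>N1 N2. M1 \<Rrightarrow> N1 \<Longrightarrow> M1 \<Rrightarrow> N2 \<Longrightarrow> \<exists>N. N1 \<Rrightarrow> N \<and> N2 \<Rrightarrow> N"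
      using less.hyps App by force
    have IH2: "\<And>N1 N2. M2 \<Rrightarrow> N1 \<Longrightarrow> M2 \<Rrightarrow> N2 \<Longrightarrow> \<exists>N. N1 \<Rrightarrow> N \<and> N2 \<Rrightarrow> N"
      using less.hyps App by force
    have IHL: "\<And>N1 N2. M1 = Lam t P \<Longrightarrow> P \<Rrightarrow> N1 \<Longrightarrow> P \<Rrightarrow> N2 \<Longrightarrow> \<exists>N. N1 \<Rrightarrow> N \<and> N2 \<Rrightarrow> N" for t P
      using less.hyps App by force
    from inv_app[OF less.prems(1)[unfolded App]] show ?thesis
    proof (elim disjE exE conjE)
      fix A1 A2 assume a: "N1 = App A1 A2" "M1 \<Rrightarrow> A1" "M2 \<Rrightarrow> A2"
      from inv_app[OF less.prems(2)[unfolded App]] show ?thesis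
      proof (elim disjE exE conjE)
        fix B1 B2 assume b: "N2 = App B1 B2" "M1 \<Rrightarrow> B1" "M2 \<Rrightarrow> B2"
        then show ?thesis using a IH1 IH2 by (blast intro: par_red.intros)
      next
        fix t P P' R' assume b: "M1 = Lam t P" "P \<Rrightarrow> P'" "M2 \<Rrightarrow> R'" "N2 = subst 0 R' P'"
        obtain P1 where P1: "A1 = Lam t P1" "P \<Rrightarrow> P1" using inv_lam a(2) b(1) by blast
        obtain P0 where "P1 \<Rrightarrow> P0" "P' \<Rrightarrow> P0" using IHL[OF b(1) P1(2) b(2)] by blast
        moreover obtain R0 where "A2 \<Rrightarrow> R0" "R' \<Rrightarrow> R0" using IH2 a(3) b(3) by blast
        ultimately show ?thesis using a b P1 by (blast intro: par_red.intros par_subst)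
      qed
    next
      fix t P P' R' assume a: "M1 = Lam t P" "P \<Rrightarrow> P'" "M2 \<Rrightarrow> R'" "N1 = subst 0 R' P'"
      from inv_app[OF less.prems(2)[unfolded App]] show ?thesis
      proof (elim disjE exE conjE)
        fix B1 B2 assume b: "N2 = App B1 B2" "M1 \<Rrightarrow> B1" "M2 \<Rrightarrow> B2"
        obtain P1 where P1: "B1 = Lam t P1" "P \<Rrightarrow> P1" using inv_lam a(1) b(2) by blast
        obtain P0 where "P1 \<Rrightarrow> P0" "P' \<Rrightarrow> P0" using IHL[OF a(1) P1(2) a(2)] by blast
        moreover obtain R0 where "B2 \<Rrightarrow> R0" "R' \<Rrightarrow> R0" using IH2 a(3) b(3) by blast
        ultimately show ?thesis using a b P1 by (blast intro: par_red.intros par_subst)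
      next
        fix t2 P2 P2' R2' assume b: "M1 = Lam t2 P2" "P2 \<Rrightarrow> P2'" "M2 \<Rrightarrow> R2'" "N2 = subst 0 R2' P2'"
        then have "P2 = P" using a by simp
        then obtain P0 where "P' \<Rrightarrow> P0" "P2' \<Rrightarrow> P0" using IHL[OF a(1) a(2)] b(2) by blast
        moreover obtain R0 where "R' \<Rrightarrow> R0" "R2' \<Rrightarrow> R0" using IH2 a(3) b(3) by blast
        ultimately show ?thesis using a b by (blast intro: par_subst)
      qed
    qed
  next
    case (TApp M1 B)
    have IH1: "\<And>N1 N2. M1 \<Rrightarrow> N1 \<Longrightarrow> M1 \<Rrightarrow> N2 \<Longrightarrow> \<exists>N. N1 \<Rrightarrow> N \<and> N2 \<Rrightarrow> N"
      using less.hyps TApp by force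
    have IHL: "\<And>N1 N2. M1 = TLam P \<Longrightarrow> P \<Rrightarrow> N1 \<Longrightarrow> P \<Rrightarrow> N2 \<Longrightarrow> \<exists>N. N1 \<Rrightarrow> N \<and> N2 \<Rrightarrow> N" for P
      using less.hyps TApp by force
    have tvs: "P \<Rrightarrow> P' \<Longrightarrow> tv_subst 0 B P \<Rrightarrow> tv_subst 0 B P'" for P P'
      by (simp add: tv_subst_ts par_ts)
    from inv_tapp[OF less.prems(1)[unfolded TApp]] show ?thesis
    proof (elim disjE exE conjE)
      fix A1 assume a: "N1 = TApp A1 B" "M1 \<Rrightarrow> A1"
      from inv_tapp[OF less.prems(2)[unfolded TApp]] show ?thesis
      proof (elim disjE exE conjE)
        fix B1 assume b: "N2 = TApp B1 B" "M1 \<Rrightarrow> B1"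
        then show ?thesis using a IH1 by (blast intro: par_red.intros)
      next
        fix P P' assume b: "M1 = TLam P" "P \<Rrightarrow> P'" "N2 = tv_subst 0 B P'"
        obtain P1 where P1: "A1 = TLam P1" "P \<Rrightarrow> P1" using inv_tlam a(2) b(1) by blast
        obtain P0 where "P1 \<Rrightarrow> P0" "P' \<Rrightarrow> P0" using IHL[OF b(1) P1(2) b(2)] by blast
        then show ?thesis using a b P1 tvs by (blast intro: par_red.intros)
      qed
    next
      fix P P' assume a: "M1 = TLam P" "P \<Rrightarrow> P'" "N1 = tv_subst 0 B P'"
      from inv_tapp[OF less.prems(2)[unfolded TApp]] show ?thesis
      proof (elim disjE exE conjE)
        fix B1 assume b: "N2 = TApp B1 B" "M1 \<Rrightarrow> B1"
        obtain P1 where P1: "B1 = TLam P1" "P \<Rrightarrow> P1" using inv_tlam a(1) b(2) by blast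
        obtain P0 where "P1 \<Rrightarrow> P0" "P' \<Rrightarrow> P0" using IHL[OF a(1) P1(2) a(2)] by blast
        then show ?thesis using a b P1 tvs by (blast intro: par_red.intros)
      next
        fix P2 P2' assume b: "M1 = TLam P2" "P2 \<Rrightarrow> P2'" "N2 = tv_subst 0 B P2'"
        then have "P2 = P" using a by simp
        then obtain P0 where "P' \<Rrightarrow> P0" "P2' \<Rrightarrow> P0" using IHL[OF a(1) a(2)] b(2) by blast
        then show ?thesis using a b tvs by blast
      qed
    qed
  qed
qed

theorem mainTheorem6:
  assumes "M \<Rrightarrow> N1" and "M \<Rrightarrow> N2"
  shows "\<exists>N. N1 \<Rrightarrow> N \<and> N2 \<Rrightarrow> N"
  using diamond[OF assms] .

end
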